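(* For all positive integers $m,n,a,b$ with $m<n$ and $a<b$, we have $\mathcal{F}(m,a,b,n)>\mathcal{F}(m,b,a,n)$.
   Context: $\mathcal{F}$ is defined on finite tuples of positive integers recursively: $\mathcal{F}(a)=1$ for every positive integer $a$; for $s\ge2$, $\mathcal{F}(a_1,\dots,a_s)=\sum_{i=1}^s\mathcal{F}(a_1,\dots,a_{i-1},a_i-1,a_{i+1},\dots,a_s)$, where a tuple with a zero entry is reduced by: $\mathcal{F}(0,a_2,\dots,a_t)=\mathcal{F}(a_2,\dots,a_t)$, $\mathcal{F}(a_1,\dots,a_t,0)=\mathcal{F}(a_1,\dots,a_t)$, and $\mathcal{F}(a_1,\dots,a_r,0,a_{r+2},\dots,a_s)=\mathcal{F}(a_1,\dots,a_{r-1},a_r+a_{r+2},a_{r+3},\dots,a_s)$. *)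

theory Defs
  imports Main
begin

text \<open>Reduction of a tuple (list) containing zero entries, following the paper:
  a leading zero is dropped, a trailing zero is dropped, and an interior zero
  merges its two neighbours into their sum.\<close>
fun red :: "nat list \<Rightarrow> nat list" where
  "red [] = []"
| "red (0 # xs) = red xs"
| "red [Suc a] = [Suc a]"
| "red [Suc a, 0] = [Suc a]"
| "red (Suc a # 0 # b # xs) = red ((Suc a + b) # xs)"
| "red (Suc a # Suc b # xs) = Suc a # red (Suc b # xs)"

lemma sum_list_red: "sum_list (red xs) = sum_list xs"
  by (induction xs rule: red.induct) auto

lemma sum_list_dec:
  fixes xs :: "nat list"
  assumes "i < length xs" "0 \<notin> set xs"
  shows "sum_list (xs[i := xs ! i - 1]) < sum_list xs"
  using assms
proof (induction xs arbitrary: i)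
  case Nil then show ?case by simp
next
  case (Cons x xs)
  show ?case
  proof (cases i)
    case 0
    have "x \<noteq> 0" using Cons.prems by simp
    then show ?thesis using 0 by (simp add: Suc_leI)
  next
    case (Suc j)
    then have "sum_list (xs[j := xs ! j - 1]) < sum_list xs"
      using Cons by simp
    then show ?thesis using Suc by simp
  qed
qed

text \<open>The function F on tuples of positive integers. Values on lists containing
  a zero (or the empty list) are junk and never used for positive tuples.\<close>
function F :: "nat list \<Rightarrow> nat" where
  "F xs = (if length xs \<le> 1 \<or> 0 \<in> set xs then 1
           else (\<Sum>i<length xs. F (red (xs[i := xs ! i - 1]))))"
  by pat_completeness auto
termination
  apply (relation "measure sum_list")
   apply simp
  apply (simp add: sum_list_red)
  using sum_list_dec by (metis One_nat_def leI)

declare F.simps[simp del]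

end

theory Submission imports Defs "HOL.Binomial_Plus" begin

lemma red_pos: "0 \<notin> set xs \<Longrightarrow> red xs = xs"
  by (induction xs rule: red.induct) auto

definition H2 :: "nat \<Rightarrow> nat \<Rightarrow> nat" where "H2 x y = F (red [x,y])"
definition H3 :: "nat \<Rightarrow> nat \<Rightarrow> nat \<Rightarrow> nat" where "H3 x y z = F (red [x,y,z])"
definition H4 :: "nat \<Rightarrow> nat \<Rightarrow> nat \<Rightarrow> nat \<Rightarrow> nat" where "H4 x y z w = F (red [x,y,z,w])"

lemma F1: "length xs \<le> 1 \<Longrightarrow> F xs = 1" by (simp add: F.simps)

lemma H2_rec: "H2 (Suc x) (Suc y) = H2 x (Suc y) + H2 (Suc x) y"
proof -
  have "H2 (Suc x) (Suc y) = F [Suc x, Suc y]" unfolding H2_def by (simp add: red_pos)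
  also have "\<dots> = H2 x (Suc y) + H2 (Suc x) y"
    apply (subst F.simps) by (simp add: lessThan_Suc H2_def)
  finally show ?thesis .
qed

lemma H2_0l: "H2 0 y = 1" unfolding H2_def by (cases y) (auto simp: F.simps)
lemma H2_0r: "H2 x 0 = 1" unfolding H2_def by (cases x) (auto simp: F.simps)

lemma H2_binom: "H2 x y = (x + y choose x)"
proof (induction x arbitrary: y)
  case 0 then show ?case by (simp add: H2_0l)
next
  case (Suc x) then show ?case
    by (induction y) (simp_all add: H2_0r H2_rec)
qed

lemma H2_sym: "H2 x y = H2 y x"
proof -
  have "(x + y choose x) = (x + y choose (x + y - x))" by (rule binomial_symmetric) simp
  then show ?thesis by (simp add: H2_binom add.commute)
qed

lemma H3_0: "H3 0 b c = H2 b c" unfolding H3_def H2_def by simp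
lemma H3_1: "H3 (Suc a) 0 c = 1" unfolding H3_def by (simp add: F1)
lemma H3_2: "H3 (Suc a) (Suc b) 0 = H2 (Suc a) (Suc b)" unfolding H3_def H2_def by simp
lemma H3_rec: "H3 (Suc a) (Suc b) (Suc c) = H3 a (Suc b) (Suc c) + H3 (Suc a) b (Suc c) + H3 (Suc a) (Suc b) c"
  unfolding H3_def
  apply (subst red_pos, simp)
  apply (subst F.simps)
  by (simp add: lessThan_Suc)

lemma H4_0: "H4 0 a b n = H3 a b n" unfolding H4_def H3_def by simp
lemma H4_1: "H4 (Suc m) 0 b n = H2 (Suc m + b) n" unfolding H4_def H2_def by simp
lemma H4_2: "H4 (Suc m) (Suc a) 0 n = H2 (Suc m) (Suc a + n)" unfolding H4_def H2_def
  by (simp add: red_pos)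
lemma H4_3: "H4 (Suc m) (Suc a) (Suc b) 0 = H3 (Suc m) (Suc a) (Suc b)" unfolding H4_def H3_def by simp
lemma H4_rec: "H4 (Suc m) (Suc a) (Suc b) (Suc n) = H4 m (Suc a) (Suc b) (Suc n) + H4 (Suc m) a (Suc b) (Suc n)
   + H4 (Suc m) (Suc a) b (Suc n) + H4 (Suc m) (Suc a) (Suc b) n"
  unfolding H4_def
  apply (subst red_pos, simp)
  apply (subst F.simps)
  by (simp add: lessThan_Suc)


lemma H3_a0[simp]: "H3 a 0 c = 1" by (cases a) (simp_all add: H3_0 H3_1 H2_0l)
lemma H3_b0[simp]: "H3 a b 0 = H2 a b"
  by (cases a; cases b) (simp_all add: H3_0 H3_2 H2_0l H2_0r)
lemma H3_00[simp]: "H3 0 b c = H2 b c" by (rule H3_0)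

lemma H4_00[simp]: "H4 0 a b n = H3 a b n" by (rule H4_0)
lemma H4_a0[simp]: "H4 m 0 b n = H2 (m+b) n" by (cases m) (simp_all add: H4_1)
lemma H4_b0[simp]: "H4 m a 0 n = H2 m (a+n)"
  by (cases m; cases a) (simp_all add: H4_2 H2_0l)
lemma H4_n0[simp]: "H4 m a b 0 = H3 m a b"
  by (cases m; cases a; cases b) (simp_all add: H4_3 H2_0l H2_0r)

lemma H2_pos: "1 \<le> H2 x y" by (simp add: H2_binom Suc_le_eq)

lemma H3_rev: "H3 a b c = H3 c b a"
proof (induction "a+b+c" arbitrary: a b c rule: less_induct)
  case less
  show ?case
  proof (cases "a = 0 \<or> b = 0 \<or> c = 0")
    case True then show ?thesis by (auto simp: H2_sym)
  next
    case False
    then obtain a' b' c' where "a = Suc a'" "b = Suc b'" "c = Suc c'"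
      by (metis not0_implies_Suc)
    then show ?thesis using less by (simp add: H3_rec)
  qed
qed

lemma H4_rev: "H4 m a b n = H4 n b a m"
proof (induction "m+a+b+n" arbitrary: m a b n rule: less_induct)
  case less
  show ?case
  proof (cases "m = 0 \<or> a = 0 \<or> b = 0 \<or> n = 0")
    case True then show ?thesis
      by (auto simp: H2_sym H3_rev add.commute)
  next
    case False
    then obtain m' a' b' n' where "m = Suc m'" "a = Suc a'" "b = Suc b'" "n = Suc n'"
      by (metis not0_implies_Suc)
    then show ?thesis using less by (simp add: H4_rec)
  qed
qed

lemma L3: "a \<le> b \<Longrightarrow> H3 b a c \<le> H3 a b c"
proof (induction "a+b+c" arbitrary: a b c rule: less_induct)
  case less
  show ?case
  proof (cases "a = b")
    case False
    with less.prems obtain b' where b: "b = Suc b'" "a \<le> b'"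
      by (metis Suc_le_eq le_neq_implies_less lessE less_Suc_eq_le not0_implies_Suc le_antisym)
    show ?thesis
    proof (cases "a = 0")
      case True then show ?thesis using b H2_pos[of b c] by simp
    next
      case False
      then obtain a' where a: "a = Suc a'" by (metis not0_implies_Suc)
      show ?thesis
      proof (cases c)
        case 0 then show ?thesis by (simp add: H2_sym)
      next
        case (Suc c')
        have 1: "H3 b a' c \<le> H3 a' b c" using less(1)[of a' b c] a less.prems by simp
        have 2: "H3 b' a c \<le> H3 a b' c" using less(1)[of a b' c] b by simp
        have 3: "H3 b a c' \<le> H3 a b c'" using less(1)[of a b c'] Suc less.prems by simp
        show ?thesis using 1 2 3 a b Suc by (simp add: H3_rec)
      qed
    qed
  qed simp
qed

lemma Bs: assumes "m < n" "0 < b" shows "H2 m (b+n) < H2 (m+b) n"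
proof -
  define N where "N = m + b + n"
  have e1: "H2 m (b+n) = N choose m" by (simp add: H2_binom N_def add.assoc)
  have e2: "H2 (m+b) n = N choose (m+b)" by (simp add: H2_binom N_def)
  have e3: "N choose (m+b) = N choose n"
  proof -
    have "N - (m+b) = n" by (simp add: N_def)
    moreover have "N choose (m+b) = N choose (N - (m+b))" by (rule binomial_symmetric) (simp add: N_def)
    ultimately show ?thesis by simp
  qed
  show ?thesis
  proof (cases "m + b \<le> n")
    case True
    then show ?thesis unfolding e1 e2
      by (intro binomial_strict_mono) (use assms in \<open>auto simp: N_def\<close>)
  next
    case False
    then show ?thesis unfolding e1 e2 e3
      by (intro binomial_strict_mono) (use assms in \<open>auto simp: N_def\<close>)
  qed
qed

lemma Bw: assumes "m \<le> n" shows "H2 m (b+n) \<le> H2 (m+b) n"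
proof (cases "m < n \<and> 0 < b")
  case True then show ?thesis using Bs[of m n b] by simp
next
  case False
  then have "m = n \<or> b = 0" using assms by auto
  then show ?thesis by (auto simp: H2_sym add.commute)
qed

lemma L4w: "m \<le> n \<Longrightarrow> a \<le> b \<Longrightarrow> H4 m b a n \<le> H4 m a b n"
proof (induction "m+a+b+n" arbitrary: m a b n rule: less_induct)
  case less
  show ?case
  proof (cases "a = b \<or> m = n")
    case True then show ?thesis using H4_rev[of m a b m] by auto
  next
    case False
    with less.prems obtain b' where b: "b = Suc b'" "a \<le> b'"
      by (metis Suc_le_eq le_neq_implies_less lessE less_Suc_eq_le not0_implies_Suc le_antisym)
    from False less.prems obtain n' where n: "n = Suc n'" "m \<le> n'"
      by (metis Suc_le_eq le_neq_implies_less lessE less_Suc_eq_le not0_implies_Suc le_antisym)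
    show ?thesis
    proof (cases "m = 0")
      case True then show ?thesis using L3 less.prems by simp
    next
      case m0: False
      then obtain m' where m: "m = Suc m'" by (metis not0_implies_Suc)
      show ?thesis
      proof (cases "a = 0")
        case True then show ?thesis using Bw[of m n b] less.prems by simp
      next
        case False
        then obtain a' where a: "a = Suc a'" by (metis not0_implies_Suc)
        have 1: "H4 m' b a n \<le> H4 m' a b n" using less(1)[of m' a b n] m less.prems by simp
        have 2: "H4 m b a' n \<le> H4 m a' b n" using less(1)[of m a' b n] a less.prems by simp
        have 3: "H4 m b' a n \<le> H4 m a b' n" using less(1)[of m a b' n] b less.prems by simp
        have 4: "H4 m b a n' \<le> H4 m a b n'" using less(1)[of m a b n'] n less.prems by simp
        show ?thesis using 1 2 3 4 a b m n by (simp add: H4_rec)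
      qed
    qed
  qed
qed

lemma L4s: "0 < m \<Longrightarrow> m < n \<Longrightarrow> 0 < a \<Longrightarrow> a < b \<Longrightarrow> H4 m b a n < H4 m a b n"
proof (induction a arbitrary: b)
  case 0 then show ?case by simp
next
  case (Suc a')
  obtain m' where m: "m = Suc m'" using Suc.prems by (cases m) auto
  obtain n' where n: "n = Suc n'" "m \<le> n'" using Suc.prems by (cases n) auto
  obtain b' where b: "b = Suc b'" "Suc a' \<le> b'" using Suc.prems by (cases b) auto
  have 2: "H4 m b a' n < H4 m a' b n"
  proof (cases "a' = 0")
    case True then show ?thesis using Bs[of m n b] Suc.prems by simp
  next
    case False then show ?thesis using Suc by simp
  qed
  have 1: "H4 m' b (Suc a') n \<le> H4 m' (Suc a') b n" using L4w[of m' n "Suc a'" b] m Suc.prems by simp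
  have 3: "H4 m b' (Suc a') n \<le> H4 m (Suc a') b' n" using L4w[of m n "Suc a'" b'] b Suc.prems by simp
  have 4: "H4 m b (Suc a') n' \<le> H4 m (Suc a') b n'" using L4w[of m n' "Suc a'" b] n Suc.prems by simp
  show ?case using 1 2 3 4 m n b by (simp add: H4_rec)
qed

theorem proposition6:
  fixes m n a b :: nat
  assumes "0 < m" "0 < n" "0 < a" "0 < b" "m < n" "a < b"
  shows "F [m, a, b, n] > F [m, b, a, n]"
proof -
  have "F [m, a, b, n] = H4 m a b n" "F [m, b, a, n] = H4 m b a n"
    unfolding H4_def using assms by (simp_all add: red_pos)
  then show ?thesis using L4s[of m n a b] assms by simp
qed

end
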